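(* Let $\alpha>-1$, $M\ge0$, $N\ge0$, and for $n\ge1$ let $$y(x)=L_n^{\alpha,M,N}(x)=A_0L_n^{(\alpha)}(x)+A_1\frac{d}{dx}L_n^{(\alpha)}(x)+A_2\frac{d^2}{dx^2}L_n^{(\alpha)}(x),$$ where $$A_0=1+M\binom{n+\alpha}{n-1}+\frac{n(\alpha+2)-(\alpha+1)}{(\alpha+1)(\alpha+3)}N\binom{n+\alpha}{n-2}+\frac{MN}{(\alpha+1)(\alpha+2)}\binom{n+\alpha}{n-1}\binom{n+\alpha+1}{n-2},$$ $$A_1=M\binom{n+\alpha}{n}+\frac{n-1}{\alpha+1}N\binom{n+\alpha}{n-1}+\frac{2MN}{(\alpha+1)^2}\binom{n+\alpha}{n}\binom{n+\alpha+1}{n-2},$$ $$A_2=\frac{N}{\alpha+1}\binom{n+\alpha}{n-1}+\frac{MN}{(\alpha+1)^2}\binom{n+\alpha}{n}\binom{n+\alpha+1}{n-1}.$$ Define for $i=0,1,2,\ldots$ $$b_i^*(\alpha,x)=\frac{1}{i!}\sum_{j=0}^{i}(-1)^j\binom{i}{j}(\alpha+1)_{i-j}x^j,\qquad c_i^*(\alpha,x)=\frac{(-1)^i}{i!}x^i.$$ Then for every $n=1,2,3,\ldots$ the polynomial $y=L_n^{\alpha,M,N}$ satisfies $$\sum_{i=0}^{\infty}b_i^*(\alpha,x)y^{(i)}(x)+M\sum_{i=0}^{\infty}c_i^*(\alpha,x)y^{(i)}(x)=0 .$$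
   Context: $L_n^{(\alpha)}(x)=\sum_{k=0}^n\frac{(-1)^k}{k!}\binom{n+\alpha}{n-k}x^k$ denotes the classical Laguerre polynomial. $(c)_m$ is the Pochhammer symbol, $\binom{a}{m}$ the generalized binomial coefficient for real $a$, with $\binom{a}{m}=0$ when $m$ is a negative integer. The polynomials $L_n^{\alpha,M,N}$ so defined are orthogonal with respect to the Sobolev inner product $\langle f,g\rangle=\frac{1}{\Gamma(\alpha+1)}\int_0^\infty x^\alpha e^{-x}f(x)g(x)\,dx+Mf(0)g(0)+Nf'(0)g'(0)$. Since $y$ is a polynomial, the sums are finite. *)

theory Defs
  imports Complex_Main "HOL-Computational_Algebra.Polynomial"
begin

definition gbinom :: "real \<Rightarrow> int \<Rightarrow> real" where
  "gbinom a m = (if m < 0 then 0 else a gchoose (nat m))"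

definition laguerre :: "nat \<Rightarrow> real \<Rightarrow> real poly" where
  "laguerre n \<alpha> = (\<Sum>k\<le>n. monom ((-1)^k / fact k * gbinom (real n + \<alpha>) (int n - int k)) k)"

definition A0 :: "real \<Rightarrow> real \<Rightarrow> real \<Rightarrow> nat \<Rightarrow> real" where
  "A0 \<alpha> M N n = 1 + M * gbinom (n + \<alpha>) (int n - 1)
     + (real n * (\<alpha> + 2) - (\<alpha> + 1)) / ((\<alpha> + 1) * (\<alpha> + 3)) * N * gbinom (n + \<alpha>) (int n - 2)
     + M * N / ((\<alpha> + 1) * (\<alpha> + 2)) * gbinom (n + \<alpha>) (int n - 1) * gbinom (n + \<alpha> + 1) (int n - 2)"

definition A1 :: "real \<Rightarrow> real \<Rightarrow> real \<Rightarrow> nat \<Rightarrow> real" where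
  "A1 \<alpha> M N n = M * gbinom (n + \<alpha>) (int n)
     + (real n - 1) / (\<alpha> + 1) * N * gbinom (n + \<alpha>) (int n - 1)
     + 2 * M * N / (\<alpha> + 1)^2 * gbinom (n + \<alpha>) (int n) * gbinom (n + \<alpha> + 1) (int n - 2)"

definition A2 :: "real \<Rightarrow> real \<Rightarrow> real \<Rightarrow> nat \<Rightarrow> real" where
  "A2 \<alpha> M N n = N / (\<alpha> + 1) * gbinom (n + \<alpha>) (int n - 1)
     + M * N / (\<alpha> + 1)^2 * gbinom (n + \<alpha>) (int n) * gbinom (n + \<alpha> + 1) (int n - 1)"

definition sobolev_laguerre :: "nat \<Rightarrow> real \<Rightarrow> real \<Rightarrow> real \<Rightarrow> real poly" where
  "sobolev_laguerre n \<alpha> M N =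
     smult (A0 \<alpha> M N n) (laguerre n \<alpha>)
   + smult (A1 \<alpha> M N n) (pderiv (laguerre n \<alpha>))
   + smult (A2 \<alpha> M N n) (pderiv (pderiv (laguerre n \<alpha>)))"

definition bstar :: "nat \<Rightarrow> real \<Rightarrow> real \<Rightarrow> real" where
  "bstar i \<alpha> x = 1 / fact i * (\<Sum>j\<le>i. (-1)^j * real (i choose j) * pochhammer (\<alpha> + 1) (i - j) * x^j)"

definition cstar :: "nat \<Rightarrow> real \<Rightarrow> real \<Rightarrow> real" where
  "cstar i \<alpha> x = (-1)^i / fact i * x^i"

end

theory Submission
  imports Defs "HOL-Computational_Algebra.Formal_Power_Series"
begin

lemma poly_bound:
  fixes p :: "real poly"
  assumes "degree p \<le> d"
  shows "poly p x = (\<Sum>i\<le>d. coeff p i * x^i)"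
  unfolding poly_altdef
  by (rule sum.mono_neutral_left) (use assms in \<open>auto simp: coeff_eq_0\<close>)

lemma hpd_zero:
  fixes p :: "real poly"
  assumes "degree p < i"
  shows "(pderiv ^^ i) p = 0"
  by (rule poly_eqI) (use assms in \<open>simp add: coeff_higher_pderiv coeff_eq_0\<close>)

lemma tri:
  fixes g :: "nat \<Rightarrow> nat \<Rightarrow> real"
  assumes "\<And>j k. d < j + k \<Longrightarrow> g j k = 0"
  shows "(\<Sum>j\<le>d. \<Sum>k\<le>d. g j k) = (\<Sum>i\<le>d. \<Sum>j\<le>i. g j (i-j))"
proof -
  have "(\<Sum>j\<le>d. \<Sum>k\<le>d. g j k) = (\<Sum>(j,k)\<in>{..d}\<times>{..d}. g j k)"
    by (rule sum.cartesian_product)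
  also have "\<dots> = (\<Sum>(j,k)\<in>{(j,k). j+k \<le> d}. g j k)"
    by (rule sum.mono_neutral_right) (auto, metis assms not_le)
  also have "\<dots> = (\<Sum>i\<le>d. \<Sum>j\<le>i. g j (i-j))"
    by (rule sum.triangle_reindex_eq)
  finally show ?thesis .
qed

lemma poch_nat: "pochhammer (real (Suc n)) j = fact (n+j) / fact n"
proof -
  have "pochhammer (1::real) (n + j) = pochhammer 1 n * pochhammer (1 + real n) j"
    by (rule pochhammer_product')
  then show ?thesis by (simp add: pochhammer_fact[symmetric] field_simps)
qed
lemma alg2: "(fj::real) \<noteq> 0 \<Longrightarrow> fk \<noteq> 0 \<Longrightarrow> s * xb / fj * (fi / fk * c * xa) = c * (xa * xb) * (s * (fi / (fj * fk)))"
  by (simp add: field_simps)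
lemma X: "j \<le> i \<Longrightarrow> (x::real)^(i-j) * x^j = x^i" by (metis le_add_diff_inverse2 power_add)
lemma g_term:
  fixes x c :: real
  assumes ji: "j \<le> i"
  shows "(-x)^j / fact j * (pochhammer (real (Suc (i-j))) j * c * x^(i-j)) = c * x^i * ((-1)^j * real (i choose j))"
proof -
  have ij: "i - j + j = i" using ji by simp
  have P: "pochhammer (real (Suc (i-j))) j = fact i / fact (i-j)"
    using poch_nat[of "i-j" j] ji by (simp only: ij)
  have B: "real (i choose j) = fact i / (fact j * fact (i-j))"
    using ji by (simp add: binomial_fact)
  have M: "(-x)^j = (-1)^j * x^j" by (rule power_minus)
  show ?thesis unfolding P B M X[OF ji, symmetric]
    by (rule alg2) auto
qed

lemma taylor0:
  fixes q :: "real poly"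
  assumes "degree q \<le> d"
  shows "(\<Sum>j\<le>d. (-x)^j / fact j * poly ((pderiv^^j) q) x) = coeff q 0"
proof -
  define g where "g j n = (-x)^j / fact j * (pochhammer (real (Suc n)) j * coeff q (n+j) * x^n)" for j n
  have "(\<Sum>j\<le>d. (-x)^j / fact j * poly ((pderiv^^j) q) x) = (\<Sum>j\<le>d. \<Sum>n\<le>d. g j n)"
  proof (rule sum.cong[OF refl])
    fix j assume "j \<in> {..d}"
    have "degree ((pderiv^^j) q) \<le> d" using assms by (simp add: degree_higher_pderiv)
    then show "(-x)^j / fact j * poly ((pderiv^^j) q) x = (\<Sum>n\<le>d. g j n)"
      by (simp add: poly_bound[of _ d] g_def sum_distrib_left coeff_higher_pderiv)
  qed
  also have "\<dots> = (\<Sum>i\<le>d. \<Sum>j\<le>i. g j (i-j))"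
    by (rule tri) (use assms in \<open>auto simp: g_def coeff_eq_0 add.commute\<close>)
  also have "\<dots> = (\<Sum>i\<le>d. if i = 0 then coeff q 0 else 0)"
  proof (rule sum.cong[OF refl])
    fix i assume "i \<in> {..d}"
    have "(\<Sum>j\<le>i. g j (i-j)) = coeff q i * x^i * (\<Sum>j\<le>i. (-1)^j * real (i choose j))"
      unfolding sum_distrib_left
    proof (rule sum.cong[OF refl])
      fix j assume "j \<in> {..i}"
      then have ji: "j \<le> i" by simp
      have ij: "i - j + j = i" using ji by simp
      show "g j (i-j) = coeff q i * x^i * ((-1)^j * real (i choose j))"
        unfolding g_def ij by (rule g_term[OF ji])
    qed
    also have "\<dots> = (if i = 0 then coeff q 0 else 0)"
      by (cases "i = 0") (simp_all add: choose_alternating_sum)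
    finally show "(\<Sum>j\<le>i. g j (i-j)) = (if i = 0 then coeff q 0 else 0)" .
  qed
  also have "\<dots> = coeff q 0" by simp
  finally show ?thesis .
qed

lemma alg1: "(fi::real) \<noteq> 0 \<Longrightarrow> fj \<noteq> 0 \<Longrightarrow> fk \<noteq> 0 \<Longrightarrow> 1 / fi * ((-1)^j * (fi / (fj * fk)) * p * x^j) * P = (-1)^j * x^j / fj * (p / fk * P)"
  by (simp add: field_simps)

lemma bsum_fin:
  fixes y :: "real poly"
  assumes "degree y \<le> d"
  shows "(\<Sum>i\<le>d. bstar i \<alpha> x * poly ((pderiv^^i) y) x) = (\<Sum>k\<le>d. pochhammer (\<alpha>+1) k * coeff y k)"
proof -
  define g where "g j k = (-x)^j / fact j * (pochhammer (\<alpha>+1) k / fact k * poly ((pderiv^^j) ((pderiv^^k) y)) x)" for j k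
  define T where "T = (\<Sum>k\<le>d. smult (pochhammer (\<alpha>+1) k / fact k) ((pderiv^^k) y))"
  have "(\<Sum>i\<le>d. bstar i \<alpha> x * poly ((pderiv^^i) y) x) = (\<Sum>i\<le>d. \<Sum>j\<le>i. g j (i-j))"
  proof (rule sum.cong[OF refl])
    fix i assume "i \<in> {..d}"
    show "bstar i \<alpha> x * poly ((pderiv^^i) y) x = (\<Sum>j\<le>i. g j (i-j))"
      unfolding bstar_def sum_distrib_left sum_distrib_right
    proof (rule sum.cong[OF refl])
      fix j assume "j \<in> {..i}"
      then have ji: "j \<le> i" by simp
      have D: "(pderiv^^j) ((pderiv^^(i-j)) y) = (pderiv^^i) y"
        using ji funpow_add[of j "i-j" pderiv] by (metis comp_apply le_add_diff_inverse)
      have C: "real (i choose j) = fact i / (fact j * fact (i-j))"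
        using ji by (simp add: binomial_fact)
      show "1 / fact i * ((-1)^j * real (i choose j) * pochhammer (\<alpha>+1) (i-j) * x^j) * poly ((pderiv^^i) y) x = g j (i-j)"
        unfolding g_def D power_minus[of x j] C
        by (rule alg1) auto
    qed
  qed
  also have "\<dots> = (\<Sum>j\<le>d. \<Sum>k\<le>d. g j k)"
  proof (rule tri[symmetric])
    fix j k assume "d < j + k"
    then have "(pderiv^^(j+k)) y = 0" using assms by (intro hpd_zero) simp
    then show "g j k = 0" unfolding g_def by (simp add: funpow_add)
  qed
  also have "\<dots> = (\<Sum>j\<le>d. (-x)^j / fact j * poly ((pderiv^^j) T) x)"
    unfolding T_def g_def higher_pderiv_sum higher_pderiv_smult poly_sum sum_distrib_left
    by simp
  also have "\<dots> = coeff T 0"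
  proof (rule taylor0)
    show "degree T \<le> d" unfolding T_def
      by (rule degree_sum_le) (use assms in \<open>auto simp: degree_higher_pderiv intro: order_trans[OF degree_smult_le]\<close>)
  qed
  also have "\<dots> = (\<Sum>k\<le>d. pochhammer (\<alpha>+1) k * coeff y k)"
    unfolding T_def coeff_sum by (simp add: coeff_higher_pderiv pochhammer_fact[symmetric])
  finally show ?thesis .
qed

lemma bsum:
  fixes y :: "real poly"
  assumes "degree y \<le> d"
  shows "(\<Sum>i. bstar i \<alpha> x * poly ((pderiv^^i) y) x) = (\<Sum>k\<le>d. pochhammer (\<alpha>+1) k * coeff y k)"
proof -
  have "(\<Sum>i. bstar i \<alpha> x * poly ((pderiv^^i) y) x) = (\<Sum>i\<le>d. bstar i \<alpha> x * poly ((pderiv^^i) y) x)"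
    by (rule suminf_finite) (use assms in \<open>auto simp: hpd_zero\<close>)
  then show ?thesis using bsum_fin[OF assms] by simp
qed

lemma csum:
  fixes y :: "real poly"
  assumes "degree y \<le> d"
  shows "(\<Sum>i. cstar i \<alpha> x * poly ((pderiv^^i) y) x) = coeff y 0"
proof -
  have "(\<Sum>i. cstar i \<alpha> x * poly ((pderiv^^i) y) x) = (\<Sum>i\<le>d. cstar i \<alpha> x * poly ((pderiv^^i) y) x)"
    by (rule suminf_finite) (use assms in \<open>auto simp: hpd_zero\<close>)
  also have "\<dots> = (\<Sum>j\<le>d. (-x)^j / fact j * poly ((pderiv^^j) y) x)"
    by (simp add: cstar_def power_minus[of x])
  finally show ?thesis using taylor0[OF assms] by simp
qed

lemma coeff_lag:
  "coeff (laguerre m \<beta>) k = (if k \<le> m then (-1)^k / fact k * gbinom (real m + \<beta>) (int m - int k) else 0)"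
  unfolding laguerre_def coeff_sum coeff_monom by (simp add: sum.delta)

lemma degree_lag: "degree (laguerre m \<beta>) \<le> m"
  unfolding laguerre_def
  by (rule degree_sum_le) (auto intro: order_trans[OF degree_monom_le])

lemma gbinom_nat: "k \<le> m \<Longrightarrow> gbinom a (int m - int k) = a gchoose (m - k)"
  unfolding gbinom_def by (simp add: nat_diff_distrib)

lemma phi_lag:
  assumes "m \<le> d"
  shows "(\<Sum>k\<le>d. pochhammer (\<alpha>+1) k * coeff (laguerre m \<beta>) k) = (real m + \<beta> - \<alpha> - 1) gchoose m"
proof -
  have "(\<Sum>k\<le>d. pochhammer (\<alpha>+1) k * coeff (laguerre m \<beta>) k) = (\<Sum>k\<le>m. pochhammer (\<alpha>+1) k * coeff (laguerre m \<beta>) k)"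
    by (rule sum.mono_neutral_right) (use assms in \<open>auto simp: coeff_lag\<close>)
  also have "\<dots> = (\<Sum>k\<in>{0..m}. ((-\<alpha>-1) gchoose k) * ((real m + \<beta>) gchoose (m - k)))"
    unfolding atLeast0AtMost[symmetric]
  proof (rule sum.cong[OF refl])
    fix k assume "k \<in> {0..m}"
    then have km: "k \<le> m" by simp
    have "(-\<alpha>-1) gchoose k = (-1)^k * pochhammer (\<alpha>+1) k / fact k"
      unfolding gbinomial_pochhammer by (simp add: add.commute)
    then show "pochhammer (\<alpha>+1) k * coeff (laguerre m \<beta>) k = ((-\<alpha>-1) gchoose k) * ((real m + \<beta>) gchoose (m - k))"
      using km by (simp add: coeff_lag gbinom_nat)
  qed
  also have "\<dots> = (-\<alpha>-1 + (real m + \<beta>)) gchoose m"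
    by (rule gbinomial_Vandermonde)
  finally show ?thesis by (simp add: algebra_simps)
qed

lemma pderiv_lag:
  assumes "n \<ge> 1"
  shows "pderiv (laguerre n \<alpha>) = smult (-1) (laguerre (n-1) (\<alpha>+1))"
proof (rule poly_eqI)
  fix k
  have r: "real (n-1) + (\<alpha>+1) = real n + \<alpha>" using assms by (simp add: of_nat_diff)
  have i: "int (n-1) - int k = int n - int (Suc k)" using assms by simp
  have f: "real (Suc k) * ((-1)^(Suc k) / fact (Suc k)) = - ((-1)^k / fact k)"
    by simp
  show "coeff (pderiv (laguerre n \<alpha>)) k = coeff (smult (-1) (laguerre (n-1) (\<alpha>+1))) k"
    unfolding coeff_pderiv coeff_smult coeff_lag r i
    using assms f by (auto simp: mult.assoc[symmetric])
qed

lemma pderiv_lag0: "pderiv (laguerre 0 \<beta>) = 0"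
  unfolding laguerre_def by (simp add: pderiv_monom)

lemma gratio:
  assumes "j \<le> m"
  shows "((real m + a) gchoose j) * pochhammer (a+1) (m-j) * fact j = pochhammer (a+1) m"
proof -
  have p: "pochhammer (a+1) m = pochhammer (a+1) (m-j) * pochhammer (a+1 + real (m-j)) j"
    using pochhammer_product[of "m-j" m "a+1"] assms by simp
  have e: "real m + a - real j + 1 = a + 1 + real (m-j)" using assms by (simp add: of_nat_diff)
  show ?thesis unfolding gbinomial_pochhammer' e p by simp
qed

lemma final_alg:
  fixes a M N n g u v w :: real
  assumes "u * (a + 1) = 1" "v * (a+2) = 1" "w * (a+3) = 1"
  defines "G1 \<equiv> g * n * u" and "G2 \<equiv> g * n * (n-1) * u * v"
    and "H2 \<equiv> g * n * (n-1) * (a+1+n) * u * v * w" and "H1 \<equiv> g * n * (a+1+n) * u * v"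
  defines "B0 \<equiv> 1 + M * G1 + (n * (a + 2) - (a + 1)) * u * w * N * G2 + M * N * u * v * G1 * H2"
    and "B1 \<equiv> M * g + (n - 1) * u * N * G1 + 2 * M * N * u^2 * g * H2"
    and "B2 \<equiv> N * u * G1 + M * N * u^2 * g * H1"
  shows "B1 * (-1) + B2 * (n - 1) + M * (B0 * g + B1 * (- G1) + B2 * G2) = 0"
  using assms(1-3) unfolding B0_def B1_def B2_def G1_def G2_def H1_def H2_def
  by algebra

lemma ratios:
  fixes \<alpha> :: real and n :: nat
  assumes "\<alpha> > -1" "n \<ge> 1"
  defines "g \<equiv> gbinom (real n + \<alpha>) (int n)"
  shows "gbinom (real n + \<alpha>) (int n - 1) = g * n / (\<alpha>+1)"
    and "gbinom (real n + \<alpha>) (int n - 2) = g * n * (n-1) / ((\<alpha>+1)*(\<alpha>+2))"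
    and "gbinom (real n + \<alpha> + 1) (int n - 2) = g * n * (n-1) * (\<alpha>+1+n) / ((\<alpha>+1)*(\<alpha>+2)*(\<alpha>+3))"
    and "gbinom (real n + \<alpha> + 1) (int n - 1) = g * n * (\<alpha>+1+n) / ((\<alpha>+1)*(\<alpha>+2))"
proof -
  define P where "P = pochhammer (\<alpha>+1) n"
  have a1: "\<alpha>+1 > 0" "\<alpha>+2>0" "\<alpha>+3>0" using assms by auto
  have gP: "g * fact n = P"
    using gratio[of n n \<alpha>] unfolding g_def gbinom_def P_def by simp
  have P1: "pochhammer (\<alpha>+1) (Suc n) = P * (\<alpha>+1+n)"
    unfolding P_def pochhammer_rec' by simp
  have fn: "fact n = real n * fact (n-1)" by (rule fact_reduce) (use assms in simp)
  have G1: "gbinom (real n + \<alpha>) (int n - 1) * (\<alpha>+1) * fact (n-1) = P"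
    using gratio[of "n-1" n \<alpha>] assms unfolding gbinom_def P_def
    by (simp add: nat_diff_distrib)
  have p2: "pochhammer (\<alpha>+1) 2 = (\<alpha>+1)*(\<alpha>+2)"
    by (simp add: eval_nat_numeral pochhammer_Suc algebra_simps)
  have p3: "pochhammer (\<alpha>+1) 3 = (\<alpha>+1)*(\<alpha>+2)*(\<alpha>+3)"
    by (simp add: eval_nat_numeral pochhammer_Suc algebra_simps)
  have fpos: "fact (n-1) > (0::real)" by simp
  show "gbinom (real n + \<alpha>) (int n - 1) = g * n / (\<alpha>+1)"
  proof -
    have "gbinom (real n + \<alpha>) (int n - 1) * (\<alpha>+1) * fact (n-1) = g * n * fact (n-1)"
      using G1 gP fn by simp
    then have "gbinom (real n + \<alpha>) (int n - 1) * (\<alpha>+1) = g * n" using fpos by simp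
    then show ?thesis using a1 by (simp add: eq_divide_eq)
  qed
  have H1: "gbinom (real n + \<alpha> + 1) (int n - 1) * ((\<alpha>+1)*(\<alpha>+2)) * fact (n-1) = P * (\<alpha>+1+n)"
  proof -
    have e: "n + 1 - (n - 1) = 2" using assms by simp
    have r: "real (n+1) + \<alpha> = real n + \<alpha> + 1" by simp
    show ?thesis
      using gratio[of "n-1" "n+1" \<alpha>] assms P1 unfolding gbinom_def e p2 r by (simp add: nat_diff_distrib)
  qed
  show "gbinom (real n + \<alpha> + 1) (int n - 1) = g * n * (\<alpha>+1+n) / ((\<alpha>+1)*(\<alpha>+2))"
  proof -
    have "gbinom (real n + \<alpha> + 1) (int n - 1) * ((\<alpha>+1)*(\<alpha>+2)) * fact (n-1) = g * n * (\<alpha>+1+n) * fact (n-1)"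
    proof -
      have "gbinom (real n + \<alpha> + 1) (int n - 1) * ((\<alpha>+1)*(\<alpha>+2)) * fact (n-1) = g * fact n * (\<alpha>+1+n)" using H1 gP by simp
      also have "\<dots> = g * n * (\<alpha>+1+n) * fact (n-1)" unfolding fn by simp
      finally show ?thesis .
    qed
    then have "gbinom (real n + \<alpha> + 1) (int n - 1) * ((\<alpha>+1)*(\<alpha>+2)) = g * n * (\<alpha>+1+n)" using fpos by simp
    then show ?thesis using a1 by (simp add: eq_divide_eq)
  qed
  show "gbinom (real n + \<alpha>) (int n - 2) = g * n * (n-1) / ((\<alpha>+1)*(\<alpha>+2))"
  proof (cases "n = 1")
    case True then show ?thesis by (simp add: gbinom_def)
  next
    case False
    then have n2: "n \<ge> 2" using assms by simp
    have nn: "n - 1 - 1 = n - 2" by simp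
    have fn2: "fact (n-1) = real (n-1) * fact (n-2)"
      using fact_reduce[where n="n-1" and 'a=real] n2 unfolding nn by simp
    have fpos2: "fact (n-2) > (0::real)" by simp
    have e: "n - (n - 2) = 2" using n2 by simp
    have E: "gbinom (real n + \<alpha>) (int n - 2) * ((\<alpha>+1)*(\<alpha>+2)) * fact (n-2) = P"
      using gratio[of "n-2" n \<alpha>] n2 unfolding gbinom_def e p2 P_def by (simp add: nat_diff_distrib)
    have "gbinom (real n + \<alpha>) (int n - 2) * ((\<alpha>+1)*(\<alpha>+2)) * fact (n-2) = g * n * (n-1) * fact (n-2)"
    proof -
      have "gbinom (real n + \<alpha>) (int n - 2) * ((\<alpha>+1)*(\<alpha>+2)) * fact (n-2) = g * fact n" using E gP by simp
      also have "\<dots> = g * (real n * (real (n-1) * fact (n-2)))" unfolding fn fn2 ..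
      also have "\<dots> = g * n * (n-1) * fact (n-2)" using n2 by (simp add: of_nat_diff)
      finally show ?thesis .
    qed
    then have "gbinom (real n + \<alpha>) (int n - 2) * ((\<alpha>+1)*(\<alpha>+2)) = g * n * (n-1)" using fpos2 by simp
    then show ?thesis using a1 by (simp add: eq_divide_eq)
  qed
  show "gbinom (real n + \<alpha> + 1) (int n - 2) = g * n * (n-1) * (\<alpha>+1+n) / ((\<alpha>+1)*(\<alpha>+2)*(\<alpha>+3))"
  proof (cases "n = 1")
    case True then show ?thesis by (simp add: gbinom_def)
  next
    case False
    then have n2: "n \<ge> 2" using assms by simp
    have nn: "n - 1 - 1 = n - 2" by simp
    have fn2: "fact (n-1) = real (n-1) * fact (n-2)"
      using fact_reduce[where n="n-1" and 'a=real] n2 unfolding nn by simp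
    have fpos2: "fact (n-2) > (0::real)" by simp
    have e: "n + 1 - (n - 2) = 3" using n2 by simp
    have r: "real (n+1) + \<alpha> = real n + \<alpha> + 1" by simp
    have E: "gbinom (real n + \<alpha> + 1) (int n - 2) * ((\<alpha>+1)*(\<alpha>+2)*(\<alpha>+3)) * fact (n-2) = P * (\<alpha>+1+n)"
      using gratio[of "n-2" "n+1" \<alpha>] n2 P1 unfolding gbinom_def e p3 r by (simp add: nat_diff_distrib)
    have "gbinom (real n + \<alpha> + 1) (int n - 2) * ((\<alpha>+1)*(\<alpha>+2)*(\<alpha>+3)) * fact (n-2) = g * n * (n-1) * (\<alpha>+1+n) * fact (n-2)"
    proof -
      have "gbinom (real n + \<alpha> + 1) (int n - 2) * ((\<alpha>+1)*(\<alpha>+2)*(\<alpha>+3)) * fact (n-2) = g * fact n * (\<alpha>+1+n)" using E gP by simp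
      also have "\<dots> = g * (real n * (real (n-1) * fact (n-2))) * (\<alpha>+1+n)" unfolding fn fn2 ..
      also have "\<dots> = g * n * (n-1) * (\<alpha>+1+n) * fact (n-2)" using n2 by (simp add: of_nat_diff)
      finally show ?thesis .
    qed
    then have "gbinom (real n + \<alpha> + 1) (int n - 2) * ((\<alpha>+1)*(\<alpha>+2)*(\<alpha>+3)) = g * n * (n-1) * (\<alpha>+1+n)" using fpos2 by simp
    then show ?thesis using a1 by (simp add: eq_divide_eq)
  qed
qed

theorem theorem3:
  fixes \<alpha> M N x :: real and n :: nat
  assumes "\<alpha> > -1" and "M \<ge> 0" and "N \<ge> 0" and "n \<ge> 1"
  defines "y \<equiv> sobolev_laguerre n \<alpha> M N"
  shows "(\<Sum>i. bstar i \<alpha> x * poly ((pderiv ^^ i) y) x)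
         + M * (\<Sum>i. cstar i \<alpha> x * poly ((pderiv ^^ i) y) x) = 0"
proof -
  define L where "L = laguerre n \<alpha>"
  define Phi where "Phi p = (\<Sum>k\<le>n. pochhammer (\<alpha>+1) k * coeff p k)" for p
  have dL: "degree L \<le> n" unfolding L_def by (rule degree_lag)
  have dL1: "degree (pderiv L) \<le> n" using dL by (simp add: degree_pderiv)
  have dL2: "degree (pderiv (pderiv L)) \<le> n" using dL by (simp add: degree_pderiv)
  have yL: "y = smult (A0 \<alpha> M N n) L + smult (A1 \<alpha> M N n) (pderiv L) + smult (A2 \<alpha> M N n) (pderiv (pderiv L))"
    unfolding y_def sobolev_laguerre_def L_def ..
  have dy: "degree y \<le> n" unfolding yL
    using dL dL1 dL2
    by (intro degree_add_le order_trans[OF degree_smult_le]) auto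
  have lin: "Phi y = A0 \<alpha> M N n * Phi L + A1 \<alpha> M N n * Phi (pderiv L) + A2 \<alpha> M N n * Phi (pderiv (pderiv L))"
    unfolding yL Phi_def coeff_add coeff_smult
    by (simp add: algebra_simps sum.distrib sum_distrib_left)
  have c0: "coeff y 0 = A0 \<alpha> M N n * coeff L 0 + A1 \<alpha> M N n * coeff (pderiv L) 0 + A2 \<alpha> M N n * coeff (pderiv (pderiv L)) 0"
    unfolding yL by simp
  have L1: "pderiv L = smult (-1) (laguerre (n-1) (\<alpha>+1))"
    unfolding L_def using assms(4) by (rule pderiv_lag)
  have PhiL: "Phi L = 0"
  proof -
    have "Phi L = (real n + \<alpha> - \<alpha> - 1) gchoose n" unfolding Phi_def L_def by (rule phi_lag) simp
    also have "real n + \<alpha> - \<alpha> - 1 = real (n-1)" using assms(4) by (simp add: of_nat_diff)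
    also have "real (n-1) gchoose n = real ((n-1) choose n)" by (rule binomial_gbinomial[symmetric])
    finally show ?thesis using assms(4) by simp
  qed
  have PhiL1: "Phi (pderiv L) = -1"
  proof -
    have "Phi (pderiv L) = - Phi (laguerre (n-1) (\<alpha>+1))"
      unfolding L1 Phi_def by (simp add: sum_negf)
    also have "Phi (laguerre (n-1) (\<alpha>+1)) = (real (n-1) + (\<alpha>+1) - \<alpha> - 1) gchoose (n-1)"
      unfolding Phi_def by (rule phi_lag) simp
    also have "real (n-1) + (\<alpha>+1) - \<alpha> - 1 = real (n-1)" by simp
    also have "real (n-1) gchoose (n-1) = real ((n-1) choose (n-1))" by (rule binomial_gbinomial[symmetric])
    finally show ?thesis by simp
  qed
  have PhiL2: "Phi (pderiv (pderiv L)) = real n - 1"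
  proof (cases "n = 1")
    case True
    then show ?thesis unfolding L1 by (simp add: pderiv_smult pderiv_minus pderiv_lag0 Phi_def)
  next
    case False
    then have n2: "n \<ge> 2" using assms(4) by simp
    have "pderiv (pderiv L) = smult (-1) (pderiv (laguerre (n-1) (\<alpha>+1)))"
      unfolding L1 by (simp add: pderiv_smult pderiv_minus)
    also have "pderiv (laguerre (n-1) (\<alpha>+1)) = smult (-1) (laguerre (n-1-1) (\<alpha>+1+1))"
      by (rule pderiv_lag) (use n2 in simp)
    finally have L2: "pderiv (pderiv L) = laguerre (n-2) (\<alpha>+2)"
      by (simp add: numeral_2_eq_2 add.assoc)
    have "Phi (laguerre (n-2) (\<alpha>+2)) = (real (n-2) + (\<alpha>+2) - \<alpha> - 1) gchoose (n-2)"
      unfolding Phi_def by (rule phi_lag) simp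
    also have "real (n-2) + (\<alpha>+2) - \<alpha> - 1 = real (n-1)" using n2 by (simp add: of_nat_diff)
    also have "real (n-1) gchoose (n-2) = real ((n-1) choose (n-2))" by (rule binomial_gbinomial[symmetric])
    also have "(n-1) choose (n-2) = n - 1"
    proof -
      have e: "n - 1 = Suc (n-2)" using n2 by simp
      show ?thesis unfolding e by (rule binomial_Suc_n)
    qed
    finally show ?thesis unfolding L2 using n2 by (simp add: of_nat_diff)
  qed
  define g where "g = gbinom (real n + \<alpha>) (int n)"
  have cL: "coeff L 0 = g" unfolding L_def g_def by (simp add: coeff_lag)
  have cL1: "coeff (pderiv L) 0 = - gbinom (real n + \<alpha>) (int n - 1)"
    unfolding L_def using assms(4) by (simp add: coeff_pderiv coeff_lag)
  have cL2: "coeff (pderiv (pderiv L)) 0 = gbinom (real n + \<alpha>) (int n - 2)"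
  proof (cases "n = 1")
    case True then show ?thesis unfolding L_def by (simp add: coeff_pderiv coeff_lag gbinom_def)
  next
    case False then show ?thesis using assms(4) unfolding L_def
      by (simp add: coeff_pderiv coeff_lag numeral_2_eq_2)
  qed
  have B: "(\<Sum>i. bstar i \<alpha> x * poly ((pderiv ^^ i) y) x) = Phi y"
    unfolding Phi_def by (rule bsum[OF dy])
  have C: "(\<Sum>i. cstar i \<alpha> x * poly ((pderiv ^^ i) y) x) = coeff y 0"
    by (rule csum[OF dy])
  note R = ratios[OF assms(1) assms(4), folded g_def]
  have a1: "\<alpha>+1 \<noteq> 0" "\<alpha>+2 \<noteq> 0" "\<alpha>+3 \<noteq> 0" using assms(1) by auto
  define u where "u = 1/(\<alpha>+1)"
  define v where "v = 1/(\<alpha>+2)"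
  define w where "w = 1/(\<alpha>+3)"
  have uvw: "u * (\<alpha>+1) = 1" "v * (\<alpha>+2) = 1" "w * (\<alpha>+3) = 1" using a1 unfolding u_def v_def w_def by auto
  define G1 where "G1 = g * real n * u"
  define G2 where "G2 = g * real n * (real n - 1) * u * v"
  define H2 where "H2 = g * real n * (real n - 1) * (\<alpha>+1+real n) * u * v * w"
  define H1 where "H1 = g * real n * (\<alpha>+1+real n) * u * v"
  have RG1: "gbinom (real n + \<alpha>) (int n - 1) = G1" unfolding R G1_def u_def by simp
  have RG2: "gbinom (real n + \<alpha>) (int n - 2) = G2" unfolding R G2_def u_def v_def using assms(4) by (simp add: of_nat_diff)
  have RH2: "gbinom (real n + \<alpha> + 1) (int n - 2) = H2" unfolding R H2_def u_def v_def w_def using assms(4) by (simp add: of_nat_diff)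
  have RH1: "gbinom (real n + \<alpha> + 1) (int n - 1) = H1" unfolding R H1_def u_def v_def by simp
  have eA0: "A0 \<alpha> M N n = 1 + M * G1 + (real n * (\<alpha> + 2) - (\<alpha> + 1)) * u * w * N * G2 + M * N * u * v * G1 * H2"
    unfolding A0_def RG1 RG2 RH2 u_def v_def w_def by simp
  have eA1: "A1 \<alpha> M N n = M * g + (real n - 1) * u * N * G1 + 2 * M * N * u^2 * g * H2"
    unfolding A1_def RG1 RG2 RH2 g_def[symmetric] u_def v_def w_def by (simp add: power_one_over)
  have eA2: "A2 \<alpha> M N n = N * u * G1 + M * N * u^2 * g * H1"
    unfolding A2_def RG1 RH1 g_def[symmetric] u_def by (simp add: power_one_over)
  have main: "Phi y + M * coeff y 0 = A1 \<alpha> M N n * (-1) + A2 \<alpha> M N n * (real n - 1) + M * (A0 \<alpha> M N n * g + A1 \<alpha> M N n * (- G1) + A2 \<alpha> M N n * G2)"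
    unfolding lin c0 PhiL PhiL1 PhiL2 cL cL1 cL2 RG1 RG2 by simp
  have fin: "A1 \<alpha> M N n * (-1) + A2 \<alpha> M N n * (real n - 1) + M * (A0 \<alpha> M N n * g + A1 \<alpha> M N n * (- G1) + A2 \<alpha> M N n * G2) = 0"
    unfolding eA0 eA1 eA2 G1_def G2_def H1_def H2_def by (rule final_alg[OF uvw])
  show ?thesis unfolding B C main fin ..
qed

end
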